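(* For every positive integer $t$, let $s_{\max}(t)$ be the maximum size of a Sidon set in $\mathbb{F}_2^t$ and $s^{\mathrm{sf}}_{\max}(t)$ the maximum size of a sum-free Sidon set in $\mathbb{F}_2^t$. Then $s_{\max}(t) = s^{\mathrm{sf}}_{\max}(t)+1$.
   Context: $\mathbb{F}_2^t$ is the $t$-dimensional vector space over $\mathbb{F}_2$. A subset $M\subseteq\mathbb{F}_2^t$ is Sidon if $m_1+m_2\neq m_3+m_4$ for all pairwise distinct $m_1,m_2,m_3,m_4\in M$; it is sum-free if $m_1+m_2\neq m_3$ for all $m_1,m_2,m_3\in M$ (not necessarily distinct). *)

theory Defs
  imports "HOL-Analysis.Analysis" "HOL-Library.Z2"
begin

text \<open>F_2^t is rendered as the type bit ^ 'n, where 'n is a finite index type with CARD('n) = t.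
  Addition is componentwise addition in the field bit = F_2.\<close>

definition sidon :: "'a::ab_group_add set \<Rightarrow> bool" where
  "sidon M \<longleftrightarrow> (\<forall>m1\<in>M. \<forall>m2\<in>M. \<forall>m3\<in>M. \<forall>m4\<in>M.
      distinct [m1, m2, m3, m4] \<longrightarrow> m1 + m2 \<noteq> m3 + m4)"

definition sum_free :: "'a::ab_group_add set \<Rightarrow> bool" where
  "sum_free M \<longleftrightarrow> (\<forall>m1\<in>M. \<forall>m2\<in>M. \<forall>m3\<in>M. m1 + m2 \<noteq> m3)"

definition s_max :: "'n::finite itself \<Rightarrow> nat" where
  "s_max _ = Max {card M | M :: (bit ^ 'n) set. sidon M}"

definition s_sf_max :: "'n::finite itself \<Rightarrow> nat" where
  "s_sf_max _ = Max {card M | M :: (bit ^ 'n) set. sidon M \<and> sum_free M}"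

end

theory Submission
  imports Defs
begin

lemma bitvec_double: "(x::bit^'n) + x = 0"
  by (simp add: vec_eq_iff)

lemma bitvec_eq: "(x::bit^'n) + y = 0 \<longleftrightarrow> x = y"
proof -
  have "- y = y" using minus_unique[OF bitvec_double[of y]] .
  then show ?thesis using eq_neg_iff_add_eq_0[of x y] by (simp only:)
qed

lemma finite_bit_UNIV: "finite (UNIV :: bit set)"
proof -
  have "(UNIV :: bit set) \<subseteq> {0, 1}"
  proof
    fix x :: bit show "x \<in> {0, 1}" using bit_not_zero_iff[of x] by auto
  qed
  then show ?thesis by (rule finite_subset) simp
qed

lemma finite_bitvec_UNIV: "finite (UNIV :: (bit^'n) set)"
proof (subst bij_betw_finite)
  show "bij_betw vec_nth UNIV (Pi (UNIV :: 'n set) (\<lambda>_. UNIV :: bit set))"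
    by (intro bij_betwI[of _ _ _ vec_lambda]) (auto simp: vec_eq_iff)
  have "finite (PiE (UNIV :: 'n set) (\<lambda>_. UNIV :: bit set))"
    by (intro finite_PiE finite_bit_UNIV) auto
  also have "(PiE (UNIV :: 'n set) (\<lambda>_. UNIV :: bit set)) = Pi UNIV (\<lambda>_. UNIV)"
    by auto
  finally show "finite (Pi (UNIV :: 'n set) (\<lambda>_. UNIV :: bit set))" .
qed

lemma finite_bitvec: "finite (S :: (bit^'n) set)"
  by (rule finite_subset[OF subset_UNIV finite_bitvec_UNIV])

lemma fin_sets: "finite {card M | M :: (bit ^ 'n) set. P M}"
proof -
  have "{card M | M :: (bit ^ 'n) set. P M} \<subseteq> card ` (UNIV :: (bit ^ 'n) set set)"
    by blast
  moreover have "finite (card ` (UNIV :: (bit ^ 'n) set set))"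
    using finite_Pow_iff[THEN iffD2, OF finite_bitvec_UNIV[where 'n='n]] by simp
  ultimately show ?thesis by (rule finite_subset)
qed

lemma sf_to_sidon:
  fixes S :: "(bit^'n) set"
  assumes "sidon S" "sum_free S"
  shows "sidon (insert 0 S)" "card (insert 0 S) = card S + 1"
proof -
  have z: "0 \<notin> S" using assms(2) unfolding sum_free_def
    by (metis bitvec_double)
  show "card (insert 0 S) = card S + 1" using z finite_bitvec[of S] by (simp add: card_insert_if)
  show "sidon (insert 0 S)"
    unfolding sidon_def
  proof (intro ballI impI)
    fix m1 m2 m3 m4 assume m: "m1 \<in> insert 0 S" "m2 \<in> insert 0 S" "m3 \<in> insert 0 S" "m4 \<in> insert 0 S"
      and d: "distinct [m1, m2, m3, m4]"
    show "m1 + m2 \<noteq> m3 + m4"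
    proof
      assume e: "m1 + m2 = m3 + m4"
      have sf: "\<And>a b c. a \<in> S \<Longrightarrow> b \<in> S \<Longrightarrow> c \<in> S \<Longrightarrow> a + b \<noteq> c"
        using assms(2) unfolding sum_free_def by blast
      have sd: "\<And>a b c d. a \<in> S \<Longrightarrow> b \<in> S \<Longrightarrow> c \<in> S \<Longrightarrow> d \<in> S \<Longrightarrow> distinct [a,b,c,d] \<Longrightarrow> a + b \<noteq> c + d"
        using assms(1) unfolding sidon_def by blast
      consider "m1 = 0" | "m2 = 0" | "m3 = 0" | "m4 = 0" | "m1 \<in> S" "m2 \<in> S" "m3 \<in> S" "m4 \<in> S"
        using m by blast
      then show False
      proof cases
        case 1
        have "m3 \<in> S" "m4 \<in> S" "m2 \<in> S" using m d 1 by auto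
        moreover have "m3 + m4 = m2" using e 1 by simp
        ultimately show False using sf by blast
      next
        case 2
        have "m3 \<in> S" "m4 \<in> S" "m1 \<in> S" using m d 2 by auto
        moreover have "m3 + m4 = m1" using e 2 by simp
        ultimately show False using sf by blast
      next
        case 3
        have "m1 \<in> S" "m2 \<in> S" "m4 \<in> S" using m d 3 by auto
        moreover have "m1 + m2 = m4" using e 3 by simp
        ultimately show False using sf by blast
      next
        case 4
        have "m1 \<in> S" "m2 \<in> S" "m3 \<in> S" using m d 4 by auto
        moreover have "m1 + m2 = m3" using e 4 by simp
        ultimately show False using sf by blast
      next
        case 5 then show False using e d sd by blast
      qed
    qed
  qed
qed

lemma sidon_to_sf:
  fixes M :: "(bit^'n) set"
  assumes "sidon M" "a \<in> M"
  defines "S \<equiv> (\<lambda>x. x + a) ` (M - {a})"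
  shows "sidon S" "sum_free S" "card S + 1 = card M"
proof -
  have sd: "\<And>p q r s. p \<in> M \<Longrightarrow> q \<in> M \<Longrightarrow> r \<in> M \<Longrightarrow> s \<in> M \<Longrightarrow> distinct [p,q,r,s] \<Longrightarrow> p + q \<noteq> r + s"
    using assms(1) unfolding sidon_def by blast
  have inj: "inj_on (\<lambda>x. x + a) X" for X by (auto intro: inj_onI)
  have fM: "finite M" by (rule finite_bitvec)
  have c1: "card S = card (M - {a})" unfolding S_def by (rule card_image[OF inj])
  have c2: "card (M - {a}) = card M - 1" using assms(2) by (rule card_Diff_singleton)
  have c3: "card M > 0" using fM assms(2) card_gt_0_iff by blast
  show "card S + 1 = card M" using c1 c2 c3 by linarith
  have sw: "\<And>x y. (x::bit^'n) + a + (y + a) = x + y"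
  proof -
    fix x y :: "bit^'n"
    have "x + a + (y + a) = (x + y) + (a + a)" by (simp add: algebra_simps)
    then show "x + a + (y + a) = x + y" by (simp only: bitvec_double add_0_right)
  qed
  show "sidon S"
    unfolding sidon_def S_def
  proof (intro ballI impI)
    fix m1 m2 m3 m4 assume m: "m1 \<in> (\<lambda>x. x + a) ` (M - {a})" "m2 \<in> (\<lambda>x. x + a) ` (M - {a})"
      "m3 \<in> (\<lambda>x. x + a) ` (M - {a})" "m4 \<in> (\<lambda>x. x + a) ` (M - {a})"
      and d: "distinct [m1, m2, m3, m4]"
    obtain p where p: "p \<in> M" "m1 = p + a" using m(1) by blast
    obtain q where q: "q \<in> M" "m2 = q + a" using m(2) by blast
    obtain r where r: "r \<in> M" "m3 = r + a" using m(3) by blast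
    obtain s where s: "s \<in> M" "m4 = s + a" using m(4) by blast
    note pe = p(2) q(2) r(2) s(2)
    have "p \<in> M" "q \<in> M" "r \<in> M" "s \<in> M" using p q r s by simp_all
    moreover have "distinct [p,q,r,s]" using d pe by auto
    ultimately have "p + q \<noteq> r + s" using sd by blast
    moreover have "m1 + m2 = p + q" "m3 + m4 = r + s" using pe sw by simp_all
    ultimately show "m1 + m2 \<noteq> m3 + m4" by simp
  qed
  show "sum_free S"
    unfolding sum_free_def S_def
  proof (intro ballI)
    fix m1 m2 m3 assume m: "m1 \<in> (\<lambda>x. x + a) ` (M - {a})" "m2 \<in> (\<lambda>x. x + a) ` (M - {a})"
      "m3 \<in> (\<lambda>x. x + a) ` (M - {a})"
    obtain p where p: "p \<in> M" "p \<noteq> a" "m1 = p + a" using m(1) by blast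
    obtain q where q: "q \<in> M" "q \<noteq> a" "m2 = q + a" using m(2) by blast
    obtain r where r: "r \<in> M" "r \<noteq> a" "m3 = r + a" using m(3) by blast
    note pe = p(3) q(3) r(3)
    have pm: "p \<in> M" "q \<in> M" "r \<in> M" "p \<noteq> a" "q \<noteq> a" "r \<noteq> a" using p q r by simp_all
    show "m1 + m2 \<noteq> m3"
    proof
      assume e: "m1 + m2 = m3"
      hence e2: "p + q = r + a" using pe sw by simp
      show False
      proof (cases "p = q")
        case True
        have "p + q = 0" by (simp only: True bitvec_double)
        then have "r + a = 0" using e2 by simp
        then show False using pm bitvec_eq by blast
      next
        case False
        have "r \<noteq> p"
        proof
          assume "r = p" then have "q = a" using e2 by simp
          then show False using pm by simp
        qed
        moreover have "r \<noteq> q"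
        proof
          assume "r = q" then have "q + p = q + a" using e2 by (simp add: add.commute)
          then have "p = a" by simp
          then show False using pm by simp
        qed
        ultimately have "distinct [p,q,r,a]" using False pm by auto
        then show False using sd[of p q r a] pm assms(2) e2 by blast
      qed
    qed
  qed
qed

theorem proposition2p5:
  shows "s_max TYPE('n::finite) = s_sf_max TYPE('n) + 1"
proof -
  let ?A = "{card M | M :: (bit ^ 'n) set. sidon M}"
  let ?B = "{card M | M :: (bit ^ 'n) set. sidon M \<and> sum_free M}"
  have fA: "finite ?A" and fB: "finite ?B" by (rule fin_sets)+
  have "sidon ({}::(bit^'n) set) \<and> sum_free ({}::(bit^'n) set)"
    by (simp add: sidon_def sum_free_def)
  then have neB: "?B \<noteq> {}" by blast
  have "Max ?B \<in> ?B" by (rule Max_in[OF fB neB])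
  then have "\<exists>S :: (bit^'n) set. Max ?B = card S \<and> sidon S \<and> sum_free S"
    by (simp only: mem_Collect_eq)
  then obtain S :: "(bit^'n) set" where S0: "Max ?B = card S" "sidon S" "sum_free S"
    by blast
  note S = S0(2) S0(3) S0(1)[symmetric]
  have inA: "card (insert 0 S) \<in> ?A" using sf_to_sidon(1)[OF S(1,2)] by blast
  then have neA: "?A \<noteq> {}" by blast
  have "card (insert 0 S) \<le> Max ?A" by (rule Max_ge[OF fA inA])
  then have ge: "Max ?B + 1 \<le> Max ?A" using sf_to_sidon(2)[OF S(1,2)] S(3) by linarith
  have "Max ?A \<in> ?A" by (rule Max_in[OF fA neA])
  then have "\<exists>M :: (bit^'n) set. Max ?A = card M \<and> sidon M"
    by (simp only: mem_Collect_eq)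
  then obtain M :: "(bit^'n) set" where M0: "Max ?A = card M" "sidon M"
    by blast
  note M = M0(2) M0(1)[symmetric]
  have "card M > 0" using M(2) ge by linarith
  then have "M \<noteq> {}" by auto
  then obtain a where a: "a \<in> M" by blast
  let ?S = "(\<lambda>x. x + a) ` (M - {a})"
  have inB: "card ?S \<in> ?B" using sidon_to_sf(1,2)[OF M(1) a] by blast
  have "card ?S \<le> Max ?B" by (rule Max_ge[OF fB inB])
  then have "Max ?A \<le> Max ?B + 1" using sidon_to_sf(3)[OF M(1) a] M(2) by linarith
  then show ?thesis using ge unfolding s_max_def s_sf_max_def by linarith
qed

end
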